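(* For all integers $\alpha,\beta,\gamma,\delta,\epsilon$ with $\alpha,\gamma,\delta>0$, the map $$(h,j,k,m,n)\mapsto\big(\alpha\gamma^2\delta^2h+j\alpha\gamma^2\delta(\delta-1)/2,\ \alpha\gamma\delta j-\alpha\delta\epsilon k-\beta m,\ \alpha\gamma\delta k,\ \gamma m,\ \delta n\big)$$ is an injective group homomorphism from $\mathrm H_{5,3}$ into $\mathrm H_{5,3}(\alpha,\beta,\gamma,\delta,\epsilon)$. Consequently each $\mathrm H_{5,3}(\alpha,\beta,\gamma,\delta,\epsilon)$ (with parameters as in the classification of discrete cocompact subgroups of $\mathrm G_{5,3}$) is isomorphic to a subgroup of every other one.
   Context: For integers $\alpha,\beta,\gamma,\delta,\epsilon$, $\mathrm H_{5,3}(\alpha,\beta,\gamma,\delta,\epsilon)$ denotes $\mathbb Z^5$ with multiplication $$(h,j,k,m,n)(h',j',k',m',n')=\big(h+h'+\gamma nj'+\alpha\gamma m'n(n-1)/2+\beta nm'+\delta mk'+\epsilon nk',\ j+j'+\alpha nm',\ k+k',\ m+m',\ n+n'\big),$$ and $\mathrm H_{5,3}=\mathrm H_{5,3}(1,0,1,1,0)$. It is known (and may be used) that every $\mathrm H_{5,3}(\alpha,\beta,\gamma,\delta,\epsilon)$ with $\alpha,\gamma,\delta>0$ is isomorphic to a subgroup of $\mathrm H_{5,3}$. *)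

theory Defs
  imports "HOL-Algebra.Group"
begin

type_synonym z5 = "int \<times> int \<times> int \<times> int \<times> int"

text \<open>Multiplication of H_{5,3}(alpha,beta,gamma,delta,epsilon) on Z^5.
  Note n*(n-1) is always even, so integer division by 2 is exact.\<close>
definition H53_mult :: "int \<Rightarrow> int \<Rightarrow> int \<Rightarrow> int \<Rightarrow> int \<Rightarrow> z5 \<Rightarrow> z5 \<Rightarrow> z5" where
  "H53_mult \<alpha> \<beta> \<gamma> \<delta> \<epsilon> x y =
     (case x of (h, j, k, m, n) \<Rightarrow> case y of (h', j', k', m', n') \<Rightarrow>
       (h + h' + \<gamma> * n * j' + \<alpha> * \<gamma> * m' * ((n * (n - 1)) div 2) + \<beta> * n * m'
          + \<delta> * m * k' + \<epsilon> * n * k',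
        j + j' + \<alpha> * n * m', k + k', m + m', n + n'))"

definition H53g :: "int \<Rightarrow> int \<Rightarrow> int \<Rightarrow> int \<Rightarrow> int \<Rightarrow> z5 monoid" where
  "H53g \<alpha> \<beta> \<gamma> \<delta> \<epsilon> = \<lparr> carrier = UNIV, mult = H53_mult \<alpha> \<beta> \<gamma> \<delta> \<epsilon>, one = (0, 0, 0, 0, 0) \<rparr>"

definition H53 :: "z5 monoid" where
  "H53 = H53g 1 0 1 1 0"

definition embedH53 :: "int \<Rightarrow> int \<Rightarrow> int \<Rightarrow> int \<Rightarrow> int \<Rightarrow> z5 \<Rightarrow> z5" where
  "embedH53 \<alpha> \<beta> \<gamma> \<delta> \<epsilon> x =
     (case x of (h, j, k, m, n) \<Rightarrow>
       (\<alpha> * \<gamma>^2 * \<delta>^2 * h + j * \<alpha> * \<gamma>^2 * ((\<delta> * (\<delta> - 1)) div 2),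
        \<alpha> * \<gamma> * \<delta> * j - \<alpha> * \<delta> * \<epsilon> * k - \<beta> * m,
        \<alpha> * \<gamma> * \<delta> * k, \<gamma> * m, \<delta> * n))"

end

theory Submission
  imports Defs
begin

lemma cancel2: "2*(a::int) = 2*b \<Longrightarrow> a = b" by simp

lemma T2: "2 * ((n::int) * (n - 1) div 2) = n * (n - 1)"
proof -
  have "even (n * (n - 1))" by simp
  then show ?thesis by simp
qed

lemma Tadd: "((n::int) + n') * (n + n' - 1) div 2 = n * (n - 1) div 2 + n' * (n' - 1) div 2 + n * n'"
proof -
  have "2 * (((n::int) + n') * (n + n' - 1) div 2) = 2 * (n * (n - 1) div 2 + n' * (n' - 1) div 2 + n * n')"
    unfolding distrib_left T2 by (simp add: algebra_simps)
  then show ?thesis by (rule cancel2)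
qed

lemma Tmul: "((d::int) * n) * (d * n - 1) div 2 = d^2 * (n * (n - 1) div 2) + n * (d * (d - 1) div 2)"
proof -
  have "2 * (((d::int) * n) * (d * n - 1) div 2) = 2 * (d^2 * (n * (n - 1) div 2) + n * (d * (d - 1) div 2))"
    unfolding distrib_left T2 mult.left_commute[of 2] by (simp add: algebra_simps power2_eq_square)
  then show ?thesis by (rule cancel2)
qed

definition psi :: "int \<Rightarrow> int \<Rightarrow> int \<Rightarrow> int \<Rightarrow> int \<Rightarrow> z5 \<Rightarrow> z5" where
  "psi a b c d e x = (case x of (h, j, k, m, n) \<Rightarrow>
     (2*a*c*h, 2*c*j + 2*e*k + (2*b - a*c + 1)*m, a*c*d*k, 2*m, a*c*n))"

lemma embed_mult:
  "embedH53 a b c d e (H53_mult 1 0 1 1 0 x y) =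
   H53_mult a b c d e (embedH53 a b c d e x) (embedH53 a b c d e y)"
proof -
  obtain h j k m n where x: "x = (h,j,k,m,n)" by (cases x) auto
  obtain h' j' k' m' n' where y: "y = (h',j',k',m',n')" by (cases y) auto
  define D where "D = d * (d - 1) div 2"
  define Tn where "Tn = n * (n - 1) div 2"
  have e1: "d * n * (d * n - 1) div 2 = d^2 * Tn + n * D" unfolding D_def Tn_def by (rule Tmul)
  show ?thesis unfolding x y H53_mult_def embedH53_def
    by (simp add: e1 flip: D_def Tn_def, simp add: algebra_simps power2_eq_square)
qed

lemma psi_mult:
  "psi a b c d e (H53_mult a b c d e x y) =
   H53_mult 1 0 1 1 0 (psi a b c d e x) (psi a b c d e y)"
proof -
  obtain h j k m n where x: "x = (h,j,k,m,n)" by (cases x) auto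
  obtain h' j' k' m' n' where y: "y = (h',j',k',m',n')" by (cases y) auto
  define D where "D = a * c * (a * c - 1) div 2"
  define Tn where "Tn = n * (n - 1) div 2"
  have e1: "a * c * n * (a * c * n - 1) div 2 = (a*c)^2 * Tn + n * D" unfolding D_def Tn_def by (rule Tmul)
  have D2: "2 * D = a * c * (a * c - 1)" unfolding D_def by (rule T2)
  show ?thesis unfolding x y H53_mult_def psi_def
    apply (simp add: e1 flip: D_def Tn_def)
    apply (simp add: algebra_simps power2_eq_square)
    using D2 by algebra
qed

lemma embed_hom: "embedH53 a b c d e \<in> hom H53 (H53g a b c d e)"
  unfolding hom_def H53_def H53g_def by (simp add: embed_mult)

lemma psi_hom: "psi a b c d e \<in> hom (H53g a b c d e) H53"
  unfolding hom_def H53_def H53g_def by (simp add: psi_mult)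

lemma embed_inj:
  assumes "a > 0" "c > 0" "d > 0"
  shows "inj (embedH53 a b c d e)"
proof (rule injI)
  fix x y assume eq: "embedH53 a b c d e x = embedH53 a b c d e y"
  obtain h j k m n where x: "x = (h,j,k,m,n)" by (cases x) auto
  obtain h' j' k' m' n' where y: "y = (h',j',k',m',n')" by (cases y) auto
  have nz: "a * c * d \<noteq> 0" "a * c^2 * d^2 \<noteq> 0" using assms by auto
  from eq have 5: "n = n'" and 4: "m = m'" and 3: "k = k'" using assms nz unfolding x y embedH53_def by auto
  from eq have "a * c * d * j = a * c * d * j'" using 3 4 unfolding x y embedH53_def by auto
  hence 2: "j = j'" using nz by simp
  from eq have "a * c^2 * d^2 * h = a * c^2 * d^2 * h'" using 2 unfolding x y embedH53_def by auto
  hence 1: "h = h'" using nz(2) by simp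
  show "x = y" using 1 2 3 4 5 x y by simp
qed

lemma psi_inj:
  assumes "a > 0" "c > 0" "d > 0"
  shows "inj (psi a b c d e)"
proof (rule injI)
  fix x y assume eq: "psi a b c d e x = psi a b c d e y"
  obtain h j k m n where x: "x = (h,j,k,m,n)" by (cases x) auto
  obtain h' j' k' m' n' where y: "y = (h',j',k',m',n')" by (cases y) auto
  have nz: "a * c * d \<noteq> 0" "a * c \<noteq> 0" "2 * c \<noteq> 0" using assms by auto
  from eq have 5: "n = n'" and 4: "m = m'" and 3: "k = k'" and 1: "h = h'" using assms nz unfolding x y psi_def by auto
  from eq have "2 * c * j = 2 * c * j'" using 3 4 unfolding x y psi_def by auto
  hence 2: "j = j'" using nz by simp
  show "x = y" using 1 2 3 4 5 x y by simp
qed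

theorem mainTheorem2:
  shows "(\<forall>\<alpha> \<beta> \<gamma> \<delta> \<epsilon> :: int. \<alpha> > 0 \<and> \<gamma> > 0 \<and> \<delta> > 0 \<longrightarrow>
            embedH53 \<alpha> \<beta> \<gamma> \<delta> \<epsilon> \<in> hom H53 (H53g \<alpha> \<beta> \<gamma> \<delta> \<epsilon>) \<and>
            inj_on (embedH53 \<alpha> \<beta> \<gamma> \<delta> \<epsilon>) (carrier H53))
       \<and> (\<forall>\<alpha> \<beta> \<gamma> \<delta> \<epsilon> \<alpha>' \<beta>' \<gamma>' \<delta>' \<epsilon>' :: int.
            \<alpha> > 0 \<and> \<gamma> > 0 \<and> \<delta> > 0 \<and> \<alpha>' > 0 \<and> \<gamma>' > 0 \<and> \<delta>' > 0 \<longrightarrow>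
            (\<exists>g. g \<in> hom (H53g \<alpha> \<beta> \<gamma> \<delta> \<epsilon>) (H53g \<alpha>' \<beta>' \<gamma>' \<delta>' \<epsilon>') \<and>
                 inj_on g (carrier (H53g \<alpha> \<beta> \<gamma> \<delta> \<epsilon>))))"
proof (rule conjI; intro allI impI)
  fix a b c d e :: int
  assume "a > 0 \<and> c > 0 \<and> d > 0"
  then show "embedH53 a b c d e \<in> hom H53 (H53g a b c d e) \<and> inj_on (embedH53 a b c d e) (carrier H53)"
    using embed_hom embed_inj by (metis inj_on_subset subset_UNIV)
next
  fix a b c d e a' b' c' d' e' :: int
  assume A: "a > 0 \<and> c > 0 \<and> d > 0 \<and> a' > 0 \<and> c' > 0 \<and> d' > 0"
  let ?g = "embedH53 a' b' c' d' e' \<circ> psi a b c d e"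
  have "?g \<in> hom (H53g a b c d e) (H53g a' b' c' d' e')"
    unfolding hom_def H53g_def using embed_mult psi_mult by (simp add: H53_def H53g_def)
  moreover have "inj ?g" using embed_inj psi_inj A by (meson inj_compose)
  ultimately show "\<exists>g. g \<in> hom (H53g a b c d e) (H53g a' b' c' d' e') \<and> inj_on g (carrier (H53g a b c d e))"
    by (metis inj_on_subset subset_UNIV)
qed

end
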